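(* Assume the abstract setting of the context. Then there exist $\epsilon_0>0$, $D'>0$ and $\lambda'>0$ such that \[ \|\mathcal L_{\omega,\epsilon}^n h\|_s\le D'e^{-\lambda' n}\|h\|_s \] for all $\epsilon\in I$ with $|\epsilon|\le\epsilon_0$, all $\omega\in\Omega'$, all $n\in\mathbb N$ and all $h\in\mathcal B_s^0$.
   Context: $(\Omega,\mathcal F,\mathbb P)$ is a probability space and $\sigma\colon\Omega\to\Omega$ an invertible, measurable, $\mathbb P$-preserving ergodic map. $(\mathcal B_w,\|\cdot\|_w)$, $(\mathcal B_s,\|\cdot\|_s)$ are Banach spaces with $\mathcal B_s\subset\mathcal B_w$ and $\|h\|_w\le\|h\|_s$ on $\mathcal B_s$. $\psi$ is a nonzero bounded linear functional on $\mathcal B_s$ admitting a bounded extension to $\mathcal B_w$; $\mathcal B_s^0:=\{h\in\mathcal B_s:\psi(h)=0\}$. $I\subset\mathbb R$ is an interval containing $0$; for $\epsilon\in I$, $\omega\in\Omega$, $\mathcal L_{\omega,\epsilon}$ is a bounded linear operator on both $\mathcal B_s$ and $\mathcal B_w$, with $\omega\mapsto\mathcal L_{\omega,\epsilon}h$ measurable for each $h\in\mathcal B_s$ and $\epsilon\in I$. $\mathcal L_\omega:=\mathcal L_{\omega,0}$, $\mathcal L^n_{\omega,\epsilon}:=\mathcal L_{\sigma^{n-1}\omega,\epsilon}\circ\cdots\circ\mathcal L_{\omega,\epsilon}$, $\mathcal L^n_\omega:=\mathcal L^n_{\omega,0}$. There are constants $C,D,\lambda>0$, $\lambda_1\in(0,1)$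 and a measurable $\sigma$-invariant set $\Omega'\subset\Omega$ with $\mathbb P(\Omega')=1$ such that for all $\epsilon\in I$, $\omega\in\Omega'$, $n\in\mathbb N$: (a) $\|\mathcal L_\omega^n h\|_s\le De^{-\lambda n}\|h\|_s$ for $h\in\mathcal B_s^0$; (b) $\|\mathcal L^n_{\omega,\epsilon}h\|_s\le C\lambda_1^n\|h\|_s+C\|h\|_w$ for $h\in\mathcal B_s$; (c) $\|(\mathcal L_{\omega,\epsilon}-\mathcal L_\omega)h\|_w\le C|\epsilon|\,\|h\|_s$ for $h\in\mathcal B_s$; (d) $\|\mathcal L^n_{\omega,\epsilon}\|_{\mathcal B_w\to\mathcal B_w}\le C$; (e) $\psi(\mathcal L_{\omega,\epsilon}h)=\psi(h)$ for $h\in\mathcal B_s$. *)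

theory Defs
  imports "HOL-Probability.Probability"
begin

fun cocycle :: "('o \<Rightarrow> 'v \<Rightarrow> 'v) \<Rightarrow> ('o \<Rightarrow> 'o) \<Rightarrow> nat \<Rightarrow> 'o \<Rightarrow> 'v \<Rightarrow> 'v" where
  "cocycle L \<sigma> 0 \<omega> = id"
| "cocycle L \<sigma> (Suc n) \<omega> = L ((\<sigma> ^^ n) \<omega>) \<circ> cocycle L \<sigma> n \<omega>"

definition measure_preserving_map :: "'a measure \<Rightarrow> ('a \<Rightarrow> 'a) \<Rightarrow> bool" where
  "measure_preserving_map M \<sigma> \<longleftrightarrow> \<sigma> \<in> M \<rightarrow>\<^sub>M M \<and>
     (\<forall>A\<in>sets M. emeasure M (\<sigma> -` A \<inter> space M) = emeasure M A)"

definition ergodic_map :: "'a measure \<Rightarrow> ('a \<Rightarrow> 'a) \<Rightarrow> bool" where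
  "ergodic_map M \<sigma> \<longleftrightarrow> measure_preserving_map M \<sigma> \<and>
     (\<forall>A\<in>sets M. \<sigma> -` A \<inter> space M = A \<longrightarrow> measure M A = 0 \<or> measure M A = 1)"

definition invertible_measurable_map :: "'a measure \<Rightarrow> ('a \<Rightarrow> 'a) \<Rightarrow> bool" where
  "invertible_measurable_map M \<sigma> \<longleftrightarrow> \<sigma> \<in> M \<rightarrow>\<^sub>M M \<and> bij_betw \<sigma> (space M) (space M) \<and>
     inv_into (space M) \<sigma> \<in> M \<rightarrow>\<^sub>M M"

end

theory Submission imports Defs begin

lemma nscale: "(1::real) \<le> c \<Longrightarrow> 0 \<le> x \<Longrightarrow> x \<le> c * x"
  by (metis mult_right_mono mult_1)
lemma nscale2: "(c::real) \<le> c' \<Longrightarrow> 0 \<le> x \<Longrightarrow> c * x + c * x \<le> 2 * c' * x"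
proof -
  assume a: "c \<le> c'" "0 \<le> x"
  have "c * x \<le> c' * x" using a by (rule mult_right_mono)
  then show ?thesis by linarith
qed
lemma cocycle_add: "cocycle L \<sigma> (m + n) \<omega> = cocycle L \<sigma> m ((\<sigma> ^^ n) \<omega>) \<circ> cocycle L \<sigma> n \<omega>"
  by (induction m) (auto simp: funpow_add)

lemma sixth: "(0::real) < P \<Longrightarrow> x \<le> 1 / (6 * P) \<Longrightarrow> P * x \<le> 1 / 6"
  by (simp add: le_divide_eq mult_ac)

theorem proposition3p2:
  fixes M :: "'o measure" and \<sigma> :: "'o \<Rightarrow> 'o"
    and j :: "'s::banach \<Rightarrow> 'w::banach"
    and \<psi> :: "'s \<Rightarrow> real" and \<psi>w :: "'w \<Rightarrow> real"
    and I :: "real set"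
    and L :: "'o \<Rightarrow> real \<Rightarrow> 's \<Rightarrow> 's"
    and Lw :: "'o \<Rightarrow> real \<Rightarrow> 'w \<Rightarrow> 'w"
    and C D \<gamma> \<kappa> :: real and \<Omega>' :: "'o set"
  assumes prob: "prob_space M"
    and inv: "invertible_measurable_map M \<sigma>"
    and erg: "ergodic_map M \<sigma>"
    \<comment> \<open>B_s embedded in B_w, with weak norm dominated by strong norm\<close>
    and j_lin: "bounded_linear j" and j_inj: "inj j"
    and j_norm: "\<And>h. norm (j h) \<le> norm h"
    \<comment> \<open>psi nonzero bounded functional on B_s with bounded extension to B_w\<close>
    and psi_lin: "bounded_linear \<psi>" and psi_nz: "\<exists>h. \<psi> h \<noteq> 0"
    and psiw_lin: "bounded_linear \<psi>w" and psi_ext: "\<And>h. \<psi>w (j h) = \<psi> h"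
    \<comment> \<open>I an interval containing 0\<close>
    and I_int: "is_interval I" and I0: "0 \<in> I"
    \<comment> \<open>operators bounded on both spaces, compatible with the inclusion\<close>
    and L_lin: "\<And>\<omega> \<epsilon>. \<omega> \<in> space M \<Longrightarrow> \<epsilon> \<in> I \<Longrightarrow> bounded_linear (L \<omega> \<epsilon>)"
    and Lw_lin: "\<And>\<omega> \<epsilon>. \<omega> \<in> space M \<Longrightarrow> \<epsilon> \<in> I \<Longrightarrow> bounded_linear (Lw \<omega> \<epsilon>)"
    and L_compat: "\<And>\<omega> \<epsilon> h. \<omega> \<in> space M \<Longrightarrow> \<epsilon> \<in> I \<Longrightarrow> Lw \<omega> \<epsilon> (j h) = j (L \<omega> \<epsilon> h)"
    and L_meas: "\<And>\<epsilon> h. \<epsilon> \<in> I \<Longrightarrow> (\<lambda>\<omega>. L \<omega> \<epsilon> h) \<in> borel_measurable M"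
    \<comment> \<open>constants and full-measure invariant set\<close>
    and C_pos: "C > 0" and D_pos: "D > 0" and lam_pos: "\<gamma> > 0"
    and lam1: "0 < \<kappa>" "\<kappa> < 1"
    and \<Omega>'_meas: "\<Omega>' \<in> sets M" and \<Omega>'_inv: "\<sigma> -` \<Omega>' \<inter> space M = \<Omega>'"
    and \<Omega>'_full: "measure M \<Omega>' = 1"
    \<comment> \<open>(a)\<close>
    and hyp_a: "\<And>\<omega> n h. \<omega> \<in> \<Omega>' \<Longrightarrow> n \<ge> 1 \<Longrightarrow> \<psi> h = 0 \<Longrightarrow>
        norm (cocycle (\<lambda>\<omega>. L \<omega> 0) \<sigma> n \<omega> h) \<le> D * exp (- \<gamma> * real n) * norm h"
    \<comment> \<open>(b)\<close>
    and hyp_b: "\<And>\<epsilon> \<omega> n h. \<epsilon> \<in> I \<Longrightarrow> \<omega> \<in> \<Omega>' \<Longrightarrow> n \<ge> 1 \<Longrightarrow>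
        norm (cocycle (\<lambda>\<omega>. L \<omega> \<epsilon>) \<sigma> n \<omega> h) \<le> C * \<kappa> ^ n * norm h + C * norm (j h)"
    \<comment> \<open>(c)\<close>
    and hyp_c: "\<And>\<epsilon> \<omega> h. \<epsilon> \<in> I \<Longrightarrow> \<omega> \<in> \<Omega>' \<Longrightarrow>
        norm (j (L \<omega> \<epsilon> h) - j (L \<omega> 0 h)) \<le> C * \<bar>\<epsilon>\<bar> * norm h"
    \<comment> \<open>(d)\<close>
    and hyp_d: "\<And>\<epsilon> \<omega> n g. \<epsilon> \<in> I \<Longrightarrow> \<omega> \<in> \<Omega>' \<Longrightarrow> n \<ge> 1 \<Longrightarrow>
        norm (cocycle (\<lambda>\<omega>. Lw \<omega> \<epsilon>) \<sigma> n \<omega> g) \<le> C * norm g"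
    \<comment> \<open>(e)\<close>
    and hyp_e: "\<And>\<epsilon> \<omega> h. \<epsilon> \<in> I \<Longrightarrow> \<omega> \<in> \<Omega>' \<Longrightarrow> \<psi> (L \<omega> \<epsilon> h) = \<psi> h"
  shows "\<exists>\<epsilon>\<^sub>0 > 0. \<exists>D' > 0. \<exists>\<mu> > 0. \<forall>\<epsilon>\<in>I. \<bar>\<epsilon>\<bar> \<le> \<epsilon>\<^sub>0 \<longrightarrow>
     (\<forall>\<omega>\<in>\<Omega>'. \<forall>n::nat. \<forall>h. \<psi> h = 0 \<longrightarrow>
        norm (cocycle (\<lambda>\<omega>. L \<omega> \<epsilon>) \<sigma> n \<omega> h) \<le> D' * exp (- \<mu> * real n) * norm h)"
  proof -
  define Lc where "Lc = (\<lambda>\<epsilon>. cocycle (\<lambda>\<omega>. L \<omega> \<epsilon>) \<sigma>)"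
  define Lwc where "Lwc = (\<lambda>\<epsilon>. cocycle (\<lambda>\<omega>. Lw \<omega> \<epsilon>) \<sigma>)"
  have sub: "\<Omega>' \<subseteq> space M" using \<Omega>'_meas sets.sets_into_space by blast
  have stepO: "\<sigma> \<omega> \<in> \<Omega>'" if "\<omega> \<in> \<Omega>'" for \<omega> using \<Omega>'_inv that by blast
  have orb: "(\<sigma> ^^ k) \<omega> \<in> \<Omega>'" if "\<omega> \<in> \<Omega>'" for k \<omega>
    using that by (induction k) (auto intro: stepO)
  define C1 where "C1 = max C 1"
  define D1 where "D1 = max D 1"
  have C1: "C \<le> C1" "1 \<le> C1" unfolding C1_def by auto
  have D1: "D \<le> D1" "1 \<le> D1" unfolding D1_def by auto
  have jdiff: "j (a - b) = j a - j b" for a b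
    using linear_diff[OF bounded_linear.linear[OF j_lin]] by blast
  have Lb: "norm (Lc \<epsilon> n \<omega> h) \<le> 2 * C1 * norm h" if "\<epsilon> \<in> I" "\<omega> \<in> \<Omega>'" for \<epsilon> \<omega> n h
  proof (cases "n = 0")
    case True
    have "norm h \<le> 2 * C1 * norm h" using C1 by (intro nscale) auto
    then show ?thesis using True by (simp add: Lc_def)
  next
    case False
    have "norm (Lc \<epsilon> n \<omega> h) \<le> C * \<kappa> ^ n * norm h + C * norm (j h)"
      using hyp_b[OF that, of n h] False unfolding Lc_def by auto
    also have "\<dots> \<le> C * norm h + C * norm h"
    proof -
      have "\<kappa> ^ n \<le> 1" using lam1 by (simp add: power_le_one)
      then have "C * \<kappa> ^ n * norm h \<le> C * 1 * norm h"
        using C_pos by (intro mult_right_mono mult_left_mono) auto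
      moreover have "C * norm (j h) \<le> C * norm h" using j_norm C_pos by (simp add: mult_left_mono)
      ultimately show ?thesis by simp
    qed
    also have "\<dots> \<le> 2 * C1 * norm h" using C1 by (intro nscale2) auto
    finally show ?thesis .
  qed
  have psi_pres: "\<psi> (Lc \<epsilon> n \<omega> h) = \<psi> h" if "\<epsilon> \<in> I" "\<omega> \<in> \<Omega>'" for \<epsilon> \<omega> n h
    using that by (induction n) (auto simp: Lc_def hyp_e orb)
  have La: "norm (Lc 0 n \<omega> h) \<le> D1 * norm h" if "\<omega> \<in> \<Omega>'" "\<psi> h = 0" for \<omega> n h
  proof (cases "n = 0")
    case True
    then show ?thesis using D1 by (simp add: Lc_def nscale)
  next
    case False
    have "norm (Lc 0 n \<omega> h) \<le> D * exp (- \<gamma> * real n) * norm h"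
      using hyp_a[OF that(1) _ that(2), of n] False unfolding Lc_def by auto
    also have "\<dots> \<le> D * 1 * norm h"
      using lam_pos D_pos by (intro mult_right_mono mult_left_mono) auto
    also have "\<dots> \<le> D1 * norm h" using D1 by (intro mult_right_mono) auto
    finally show ?thesis .
  qed
  have Lwb: "norm (Lwc \<epsilon> n \<omega> g) \<le> C1 * norm g" if "\<epsilon> \<in> I" "\<omega> \<in> \<Omega>'" for \<epsilon> \<omega> n g
  proof (cases "n = 0")
    case True
    then show ?thesis using C1 by (simp add: Lwc_def nscale)
  next
    case False
    have "norm (Lwc \<epsilon> n \<omega> g) \<le> C * norm g"
      using hyp_d[OF that, of n g] False unfolding Lwc_def by auto
    also have "\<dots> \<le> C1 * norm g" using C1 by (intro mult_right_mono) auto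
    finally show ?thesis .
  qed
  define dd where "dd = (\<lambda>\<epsilon> \<omega> x k. j (L ((\<sigma>^^k) \<omega>) \<epsilon> (Lc 0 k \<omega> x)) - j (L ((\<sigma>^^k) \<omega>) 0 (Lc 0 k \<omega> x)))"
  have tele: "j (Lc \<epsilon> n \<omega> x) - j (Lc 0 n \<omega> x) =
     (\<Sum>k<n. Lwc \<epsilon> (n - k - 1) ((\<sigma>^^Suc k) \<omega>) (dd \<epsilon> \<omega> x k))"
    if "\<epsilon> \<in> I" "\<omega> \<in> \<Omega>'" for \<epsilon> \<omega> n x
  proof (induction n)
    case 0
    then show ?case by (simp add: Lc_def)
  next
    case (Suc n)
    define w where "w = (\<sigma>^^n) \<omega>"
    have w: "w \<in> space M" using orb sub that unfolding w_def by blast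
    have lw: "linear (Lw w \<epsilon>)" using Lw_lin[OF w that(1)] bounded_linear.linear by blast
    define a where "a = Lc \<epsilon> n \<omega> x"
    define b where "b = Lc 0 n \<omega> x"
    have "j (Lc \<epsilon> (Suc n) \<omega> x) - j (Lc 0 (Suc n) \<omega> x) = j (L w \<epsilon> a) - j (L w 0 b)"
      by (simp add: Lc_def a_def b_def w_def)
    also have "\<dots> = Lw w \<epsilon> (j a - j b) + dd \<epsilon> \<omega> x n"
      using L_compat[OF w that(1)] linear_diff[OF lw]
      by (simp add: dd_def w_def b_def)
    also have "Lw w \<epsilon> (j a - j b) = (\<Sum>k<n. Lw w \<epsilon> (Lwc \<epsilon> (n - k - 1) ((\<sigma>^^Suc k) \<omega>) (dd \<epsilon> \<omega> x k)))"
      using Suc.IH linear_sum[OF lw] by (simp add: a_def b_def)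
    also have "\<dots> = (\<Sum>k<n. Lwc \<epsilon> (Suc n - k - 1) ((\<sigma>^^Suc k) \<omega>) (dd \<epsilon> \<omega> x k))"
    proof (rule sum.cong[OF refl])
      fix k assume "k \<in> {..<n}"
      then have k: "k < n" by simp
      have e: "Suc n - k - 1 = Suc (n - k - 1)" using k by simp
      have "(\<sigma>^^(n - k - 1)) ((\<sigma>^^Suc k) \<omega>) = (\<sigma>^^(n - k - 1 + Suc k)) \<omega>"
        by (simp only: funpow_add o_apply)
      also have "n - k - 1 + Suc k = n" using k by simp
      finally have "(\<sigma>^^(n - k - 1)) ((\<sigma>^^Suc k) \<omega>) = w" by (simp add: w_def)
      then show "Lw w \<epsilon> (Lwc \<epsilon> (n - k - 1) ((\<sigma>^^Suc k) \<omega>) (dd \<epsilon> \<omega> x k)) =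
          Lwc \<epsilon> (Suc n - k - 1) ((\<sigma>^^Suc k) \<omega>) (dd \<epsilon> \<omega> x k)"
        unfolding e by (simp add: Lwc_def)
    qed
    finally show ?case by (simp add: Lwc_def)
  qed
  have ebound: "norm (j (Lc \<epsilon> n \<omega> h) - j (Lc 0 n \<omega> h)) \<le> real n * (C1 * C * D1 * \<bar>\<epsilon>\<bar>) * norm h"
    if "\<epsilon> \<in> I" "\<omega> \<in> \<Omega>'" "\<psi> h = 0" for \<epsilon> \<omega> n h
  proof -
    have "norm (j (Lc \<epsilon> n \<omega> h) - j (Lc 0 n \<omega> h)) \<le> (\<Sum>k<n. norm (Lwc \<epsilon> (n - k - 1) ((\<sigma>^^Suc k) \<omega>) (dd \<epsilon> \<omega> h k)))"
      unfolding tele[OF that(1,2)] by (rule norm_sum)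
    also have "\<dots> \<le> (\<Sum>k<n. C1 * C * D1 * \<bar>\<epsilon>\<bar> * norm h)"
    proof (rule sum_mono)
      fix k assume "k \<in> {..<n}"
      have o1: "(\<sigma>^^Suc k) \<omega> \<in> \<Omega>'" "(\<sigma>^^k) \<omega> \<in> \<Omega>'" using orb that(2) by blast+
      have a: "norm (Lwc \<epsilon> (n - k - 1) ((\<sigma>^^Suc k) \<omega>) (dd \<epsilon> \<omega> h k)) \<le> C1 * norm (dd \<epsilon> \<omega> h k)"
        by (rule Lwb[OF that(1) o1(1)])
      have b: "norm (dd \<epsilon> \<omega> h k) \<le> C * \<bar>\<epsilon>\<bar> * norm (Lc 0 k \<omega> h)"
        unfolding dd_def by (rule hyp_c[OF that(1) o1(2)])
      have c: "norm (Lc 0 k \<omega> h) \<le> D1 * norm h" by (rule La[OF that(2,3)])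
      have "C * \<bar>\<epsilon>\<bar> * norm (Lc 0 k \<omega> h) \<le> C * \<bar>\<epsilon>\<bar> * (D1 * norm h)"
        using c C_pos by (intro mult_left_mono) auto
      then have "norm (dd \<epsilon> \<omega> h k) \<le> C * \<bar>\<epsilon>\<bar> * (D1 * norm h)" using b by linarith
      then have "C1 * norm (dd \<epsilon> \<omega> h k) \<le> C1 * (C * \<bar>\<epsilon>\<bar> * (D1 * norm h))"
        using C1 by (intro mult_left_mono) auto
      moreover have "C1 * (C * \<bar>\<epsilon>\<bar> * (D1 * norm h)) = C1 * C * D1 * \<bar>\<epsilon>\<bar> * norm h"
        by (simp add: mult_ac)
      ultimately show "norm (Lwc \<epsilon> (n - k - 1) ((\<sigma>^^Suc k) \<omega>) (dd \<epsilon> \<omega> h k)) \<le> C1 * C * D1 * \<bar>\<epsilon>\<bar> * norm h"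
        using a by linarith
    qed
    also have "\<dots> = real n * (C1 * C * D1 * \<bar>\<epsilon>\<bar>) * norm h" by (simp add: mult_ac)
    finally show ?thesis .
  qed
  define q where "q = max \<kappa> (exp (- \<gamma>))"
  have q: "0 < q" "q < 1" using lam1 lam_pos by (auto simp: q_def)
  define \<delta> where "\<delta> = min (1 / (6 * (C * (2 * C1)))) (1 / (6 * (C * D)))"
  have P1: "0 < C * (2 * C1)" using C_pos C1 by simp
  have P2: "0 < C * D" using C_pos D_pos by simp
  have \<delta>: "0 < \<delta>" using P1 P2 by (simp add: \<delta>_def)
  obtain n0 where n0: "q ^ n0 < \<delta>" using real_arch_pow_inv[OF \<delta> q(2)] by blast
  define N where "N = Suc n0"
  have N1: "1 \<le> N" by (simp add: N_def)
  have qN: "q ^ N \<le> q ^ n0" unfolding N_def using q by (intro power_decreasing) auto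
  have kN: "\<kappa> ^ N \<le> q ^ N" using lam1 by (intro power_mono) (auto simp: q_def)
  have eN: "exp (- \<gamma> * real N) \<le> q ^ N"
  proof -
    have "exp (- \<gamma> * real N) = exp (- \<gamma>) ^ N" using exp_of_nat_mult[of N "- \<gamma>"] by (simp add: mult.commute)
    also have "\<dots> \<le> q ^ N" by (intro power_mono) (auto simp: q_def)
    finally show ?thesis .
  qed
  have Nk: "C * (2 * C1) * \<kappa> ^ N \<le> 1 / 6"
    using sixth[OF P1, of "\<kappa> ^ N"] kN qN n0 by (simp add: \<delta>_def)
  have Ne: "C * D * exp (- \<gamma> * real N) \<le> 1 / 6"
    using sixth[OF P2, of "exp (- \<gamma> * real N)"] eN qN n0 by (simp add: \<delta>_def)
  define P where "P = C * (real N * (C1 * C * D1))"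
  have P: "0 < P" unfolding P_def using C_pos C1 D1 N1 by simp
  define \<epsilon>0 where "\<epsilon>0 = 1 / (6 * P)"
  have \<epsilon>0: "0 < \<epsilon>0" using P by (simp add: \<epsilon>0_def)
  have half: "norm (Lc \<epsilon> (2 * N) \<omega> h) \<le> 1 / 2 * norm h"
    if "\<epsilon> \<in> I" "\<bar>\<epsilon>\<bar> \<le> \<epsilon>0" "\<omega> \<in> \<Omega>'" "\<psi> h = 0" for \<epsilon> \<omega> h
  proof -
    define g where "g = Lc \<epsilon> N \<omega> h"
    have split: "Lc \<epsilon> (2 * N) \<omega> h = Lc \<epsilon> N ((\<sigma>^^N) \<omega>) g"
      using cocycle_add[of "\<lambda>\<omega>. L \<omega> \<epsilon>" \<sigma> N N \<omega>] by (simp add: Lc_def g_def mult_2)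
    have hb: "norm (Lc \<epsilon> N ((\<sigma>^^N) \<omega>) g) \<le> C * \<kappa> ^ N * norm g + C * norm (j g)"
      using hyp_b[OF that(1) orb[OF that(3)] N1] unfolding Lc_def by blast
    have gb: "norm g \<le> 2 * C1 * norm h" unfolding g_def by (rule Lb[OF that(1,3)])
    have a0: "norm (Lc 0 N \<omega> h) \<le> D * exp (- \<gamma> * real N) * norm h"
      using hyp_a[OF that(3) N1 that(4)] unfolding Lc_def by blast
    have jg: "norm (j g) \<le> D * exp (- \<gamma> * real N) * norm h + real N * (C1 * C * D1 * \<bar>\<epsilon>\<bar>) * norm h"
    proof -
      have "norm (j g) \<le> norm (j (Lc 0 N \<omega> h)) + norm (j g - j (Lc 0 N \<omega> h))" by (rule norm_triangle_sub)
      moreover have "norm (j (Lc 0 N \<omega> h)) \<le> norm (Lc 0 N \<omega> h)" by (rule j_norm)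
      moreover have "norm (j g - j (Lc 0 N \<omega> h)) \<le> real N * (C1 * C * D1 * \<bar>\<epsilon>\<bar>) * norm h"
        unfolding g_def by (rule ebound[OF that(1,3,4)])
      ultimately show ?thesis using a0 by linarith
    qed
    have t1: "C * \<kappa> ^ N * norm g \<le> 1 / 6 * norm h"
    proof -
      have "C * \<kappa> ^ N * norm g \<le> C * \<kappa> ^ N * (2 * C1 * norm h)"
        using gb C_pos lam1 by (intro mult_left_mono) auto
      also have "\<dots> = (C * (2 * C1) * \<kappa> ^ N) * norm h" by (simp add: mult_ac)
      also have "\<dots> \<le> 1 / 6 * norm h" using Nk by (intro mult_right_mono) auto
      finally show ?thesis .
    qed
    have t2: "C * norm (j g) \<le> 2 / 6 * norm h"
    proof -
      have "C * norm (j g) \<le> C * (D * exp (- \<gamma> * real N) * norm h + real N * (C1 * C * D1 * \<bar>\<epsilon>\<bar>) * norm h)"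
        using jg C_pos by (intro mult_left_mono) auto
      also have "\<dots> = (C * D * exp (- \<gamma> * real N)) * norm h + (P * \<bar>\<epsilon>\<bar>) * norm h"
        by (simp add: P_def algebra_simps)
      also have "\<dots> \<le> 1 / 6 * norm h + 1 / 6 * norm h"
      proof -
        have "P * \<bar>\<epsilon>\<bar> \<le> 1 / 6" using sixth[OF P, of "\<bar>\<epsilon>\<bar>"] that(2) by (simp add: \<epsilon>0_def)
        then have "(P * \<bar>\<epsilon>\<bar>) * norm h \<le> 1 / 6 * norm h" by (intro mult_right_mono) auto
        moreover have "(C * D * exp (- \<gamma> * real N)) * norm h \<le> 1 / 6 * norm h"
          using Ne by (intro mult_right_mono) auto
        ultimately show ?thesis by linarith
      qed
      finally show ?thesis by simp
    qed
    show ?thesis using split hb t1 t2 by simp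
  qed
  have iter: "norm (Lc \<epsilon> (m * (2 * N)) \<omega> h) \<le> (1 / 2) ^ m * norm h"
    if "\<epsilon> \<in> I" "\<bar>\<epsilon>\<bar> \<le> \<epsilon>0" "\<omega> \<in> \<Omega>'" "\<psi> h = 0" for \<epsilon> \<omega> h m
  proof (induction m)
    case 0
    then show ?case by (simp add: Lc_def)
  next
    case (Suc m)
    define u where "u = Lc \<epsilon> (m * (2 * N)) \<omega> h"
    have "Lc \<epsilon> (Suc m * (2 * N)) \<omega> h = Lc \<epsilon> (2 * N) ((\<sigma>^^(m * (2 * N))) \<omega>) u"
      using cocycle_add[of "\<lambda>\<omega>. L \<omega> \<epsilon>" \<sigma> "2 * N" "m * (2 * N)" \<omega>] by (simp add: Lc_def u_def)
    also have "norm \<dots> \<le> 1 / 2 * norm u"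
      using half[OF that(1,2) orb[OF that(3)]] psi_pres[OF that(1,3)] that(4) by (simp add: u_def)
    finally have "norm (Lc \<epsilon> (Suc m * (2 * N)) \<omega> h) \<le> 1 / 2 * norm u" .
    moreover have "1 / 2 * norm u \<le> 1 / 2 * ((1 / 2) ^ m * norm h)"
      using Suc.IH by (simp add: u_def)
    ultimately show ?case by simp
  qed
  define \<mu> where "\<mu> = ln 2 / real (2 * N)"
  have \<mu>: "0 < \<mu>" using N1 by (simp add: \<mu>_def)
  have D': "0 < 2 * (2 * C1)" using C1 by simp
  have main: "norm (cocycle (\<lambda>\<omega>. L \<omega> \<epsilon>) \<sigma> n \<omega> h) \<le> 2 * (2 * C1) * exp (- \<mu> * real n) * norm h"
    if e: "\<epsilon> \<in> I" "\<bar>\<epsilon>\<bar> \<le> \<epsilon>0" and w: "\<omega> \<in> \<Omega>'" and ph: "\<psi> h = 0" for \<epsilon> \<omega> n h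
  proof -
    define m where "m = n div (2 * N)"
    define r where "r = n mod (2 * N)"
    have nmr: "n = r + m * (2 * N)" unfolding m_def r_def by (metis mod_div_mult_eq add.commute)
    define u where "u = Lc \<epsilon> (m * (2 * N)) \<omega> h"
    have "Lc \<epsilon> n \<omega> h = Lc \<epsilon> r ((\<sigma>^^(m * (2 * N))) \<omega>) u"
      using cocycle_add[of "\<lambda>\<omega>. L \<omega> \<epsilon>" \<sigma> r "m * (2 * N)" \<omega>] nmr by (simp add: Lc_def u_def)
    then have "norm (Lc \<epsilon> n \<omega> h) \<le> 2 * C1 * norm u"
      using Lb[OF e(1) orb[OF w]] by simp
    also have "\<dots> \<le> 2 * C1 * ((1 / 2) ^ m * norm h)"
      using iter[OF e w ph, of m] C1 by (intro mult_left_mono) (auto simp: u_def)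
    also have "\<dots> \<le> 2 * C1 * (2 * exp (- \<mu> * real n) * norm h)"
    proof -
      have "r < 2 * N" using N1 by (simp add: r_def)
      then have "real n < real (m + 1) * real (2 * N)" using nmr
        by (metis add_mult_distrib mult_1 nat_add_left_cancel_less of_nat_less_iff of_nat_mult add.commute)
      then have "real n / real (2 * N) < real (m + 1)" using N1 by (simp add: divide_less_eq)
      then have "ln 2 * (real n / real (2 * N)) < ln 2 * real (m + 1)"
        by (intro mult_strict_left_mono) auto
      then have "\<mu> * real n < ln 2 * real (m + 1)" unfolding \<mu>_def
        by (simp add: field_simps)
      then have A: "exp (- (ln 2 * real (m + 1))) \<le> exp (- \<mu> * real n)" by simp
      have B: "exp (- (ln 2 * real (m + 1))) = (1 / 2) ^ (m + 1)"
      proof -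
        have "exp (- (ln 2 * real (m + 1))) = exp (- ln 2) ^ (m + 1)"
          using exp_of_nat_mult[of "m + 1" "- ln 2"] by (simp add: mult.commute)
        also have "exp (- ln 2) = 1 / (2::real)" by (simp add: exp_minus)
        finally show ?thesis .
      qed
      have "(1 / 2 :: real) ^ m = 2 * (1 / 2) ^ (m + 1)" by simp
      then have "(1 / 2) ^ m \<le> 2 * exp (- \<mu> * real n)" using A B by linarith
      then show ?thesis using C1 by (intro mult_left_mono mult_right_mono) auto
    qed
    also have "\<dots> = 2 * (2 * C1) * exp (- \<mu> * real n) * norm h" by (simp add: mult_ac)
    finally show "norm (cocycle (\<lambda>\<omega>. L \<omega> \<epsilon>) \<sigma> n \<omega> h) \<le> 2 * (2 * C1) * exp (- \<mu> * real n) * norm h"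
      by (simp add: Lc_def)
  qed
  show ?thesis using \<epsilon>0 D' \<mu> main by blast
qed

end
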